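(* Assume the setting in the context (in particular the Causal Faithfulness Condition). Let $x_i,x_j,x_k,x_u\in X$ be distinct. Suppose that $x_k$ is a parent of $x_i$ or a parent of $x_j$, that $x_u$ is an ancestor of $x_i$, and that $x_u\perp\!\!\!\perp x_k\mid x_i$. Then $x_k$ is a parent of $x_j$.
   Context: Model: $X$ is a finite set of observed random variables and $U$ a finite set of unobserved random variables; $V=X\cup U$ and $G=(V,E)$ is a DAG on $V$. Each $v_i\in V$ satisfies $v_i=\sum_{x_j\in \mathrm{pa}(v_i)\cap X} f^{(i)}_j(x_j)+\sum_{u_k\in\mathrm{pa}(v_i)\cap U} f^{(i)}_k(u_k)+n_i$, where the $f$'s are nonlinear functions and the external noises $n_i$ are jointly independent. "Parent", "ancestor", "path", "d-separation" refer to $G$. Causal Faithfulness Condition (CFC): any conditional independence among variables of $V$ that is not entailed by d-separation in $G$ does not hold. $\perp\!\!\!\perp$ denotes statistical independence. *)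

theory Defs
  imports "HOL-Probability.Probability"
begin

definition parent :: "('v \<times> 'v) set \<Rightarrow> 'v \<Rightarrow> 'v \<Rightarrow> bool" where
  "parent E a b \<longleftrightarrow> (a, b) \<in> E"

definition ancestor :: "('v \<times> 'v) set \<Rightarrow> 'v \<Rightarrow> 'v \<Rightarrow> bool" where
  "ancestor E a b \<longleftrightarrow> (a, b) \<in> E\<^sup>+"

definition is_DAG :: "'v set \<Rightarrow> ('v \<times> 'v) set \<Rightarrow> bool" where
  "is_DAG V E \<longleftrightarrow> finite V \<and> E \<subseteq> V \<times> V \<and> acyclic E"

definition is_path :: "('v \<times> 'v) set \<Rightarrow> 'v list \<Rightarrow> bool" where
  "is_path E p \<longleftrightarrow> p \<noteq> [] \<and> distinct p \<and>
     (\<forall>i. Suc i < length p \<longrightarrow> (p ! i, p ! Suc i) \<in> E \<or> (p ! Suc i, p ! i) \<in> E)"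

definition collider :: "('v \<times> 'v) set \<Rightarrow> 'v list \<Rightarrow> nat \<Rightarrow> bool" where
  "collider E p i \<longleftrightarrow> 0 < i \<and> Suc i < length p \<and>
     (p ! (i - 1), p ! i) \<in> E \<and> (p ! Suc i, p ! i) \<in> E"

definition d_connecting :: "('v \<times> 'v) set \<Rightarrow> 'v list \<Rightarrow> 'v set \<Rightarrow> bool" where
  "d_connecting E p Z \<longleftrightarrow> is_path E p \<and>
     (\<forall>i. 0 < i \<and> Suc i < length p \<longrightarrow>
        (collider E p i \<longrightarrow> (\<exists>z\<in>Z. (p ! i, z) \<in> E\<^sup>*)) \<and>
        (\<not> collider E p i \<longrightarrow> p ! i \<notin> Z))"

definition d_separated :: "('v \<times> 'v) set \<Rightarrow> 'v set \<Rightarrow> 'v set \<Rightarrow> 'v set \<Rightarrow> bool" where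
  "d_separated E A B Z \<longleftrightarrow>
     (\<forall>p. d_connecting E p Z \<longrightarrow> \<not> (hd p \<in> A \<and> last p \<in> B))"

definition gen_sigma :: "'a measure \<Rightarrow> ('v \<Rightarrow> 'a \<Rightarrow> real) \<Rightarrow> 'v set \<Rightarrow> 'a measure" where
  "gen_sigma M val S =
     vimage_algebra (space M) (\<lambda>\<omega>. restrict (\<lambda>v. val v \<omega>) S) (PiM S (\<lambda>_. borel))"

definition cond_indep_sa :: "'a measure \<Rightarrow> 'a measure \<Rightarrow> 'a measure \<Rightarrow> 'a measure \<Rightarrow> bool" where
  "cond_indep_sa M F G H \<longleftrightarrow>
     (\<forall>A\<in>sets F. \<forall>B\<in>sets G. AE \<omega> in M.
        real_cond_exp M H (indicator (A \<inter> B)) \<omega> =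
        real_cond_exp M H (indicator A) \<omega> * real_cond_exp M H (indicator B) \<omega>)"

definition cond_indep :: "'a measure \<Rightarrow> ('v \<Rightarrow> 'a \<Rightarrow> real) \<Rightarrow> 'v set \<Rightarrow> 'v set \<Rightarrow> 'v set \<Rightarrow> bool" where
  "cond_indep M val A B C \<longleftrightarrow>
     cond_indep_sa M (gen_sigma M val A) (gen_sigma M val B) (gen_sigma M val C)"

definition nonlinear :: "(real \<Rightarrow> real) \<Rightarrow> bool" where
  "nonlinear g \<longleftrightarrow> \<not> (\<exists>a b. \<forall>x. g x = a * x + b)"

(* additive nonlinear SEM on DAG (V,E), V = X \<union> U with X observed, U unobserved;
   f i j is the function applied to parent j in the equation of v_i *)
definition additive_SEM ::
  "'a measure \<Rightarrow> 'v set \<Rightarrow> 'v set \<Rightarrow> ('v \<times> 'v) set \<Rightarrow> ('v \<Rightarrow> 'a \<Rightarrow> real)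
     \<Rightarrow> ('v \<Rightarrow> 'v \<Rightarrow> real \<Rightarrow> real) \<Rightarrow> ('v \<Rightarrow> 'a \<Rightarrow> real) \<Rightarrow> bool" where
  "additive_SEM M X U E val f noise \<longleftrightarrow>
     prob_space M \<and> finite X \<and> finite U \<and> X \<inter> U = {} \<and> is_DAG (X \<union> U) E \<and>
     (\<forall>v\<in>X \<union> U. val v \<in> borel_measurable M \<and> noise v \<in> borel_measurable M) \<and>
     prob_space.indep_vars M (\<lambda>_. borel) noise (X \<union> U) \<and>
     (\<forall>i\<in>X \<union> U. \<forall>j. (j, i) \<in> E \<longrightarrow> f i j \<in> borel_measurable borel \<and> nonlinear (f i j)) \<and>
     (\<forall>i\<in>X \<union> U. \<forall>\<omega>\<in>space M.
        val i \<omega> = (\<Sum>j\<in>{j\<in>X. (j, i) \<in> E}. f i j (val j \<omega>))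
                 + (\<Sum>k\<in>{k\<in>U. (k, i) \<in> E}. f i k (val k \<omega>)) + noise i \<omega>)"

definition CFC :: "'a measure \<Rightarrow> 'v set \<Rightarrow> ('v \<times> 'v) set \<Rightarrow> ('v \<Rightarrow> 'a \<Rightarrow> real) \<Rightarrow> bool" where
  "CFC M V E val \<longleftrightarrow>
     (\<forall>A B C. A \<subseteq> V \<longrightarrow> B \<subseteq> V \<longrightarrow> C \<subseteq> V \<longrightarrow>
        A \<inter> B = {} \<longrightarrow> A \<inter> C = {} \<longrightarrow> B \<inter> C = {} \<longrightarrow>
        cond_indep M val A B C \<longrightarrow> d_separated E A B C)"

end

theory Submission
  imports Defs
begin

definition dwalk :: "('v \<times> 'v) set \<Rightarrow> 'v list \<Rightarrow> bool" where
  "dwalk E p \<longleftrightarrow> (\<forall>i. Suc i < length p \<longrightarrow> (p!i, p!Suc i) \<in> E)"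

lemma walk_lt:
  assumes "dwalk E p" "i < j" "j < length p"
  shows "(p!i, p!j) \<in> E\<^sup>+"
  using assms(2,3)
proof (induction j)
  case 0 then show ?case by simp
next
  case (Suc j)
  have e: "(p!j, p!Suc j) \<in> E" using assms(1) Suc.prems unfolding dwalk_def by auto
  show ?case
  proof (cases "i = j")
    case True then show ?thesis using e by auto
  next
    case False then have "(p!i,p!j) \<in> E\<^sup>+" using Suc by auto
    then show ?thesis using e by (meson trancl_into_trancl)
  qed
qed

lemma walk_distinct:
  assumes "acyclic E" "dwalk E p" shows "distinct p"
proof -
  have "p!i \<noteq> p!j" if "i < j" "j < length p" for i j
    using walk_lt[OF assms(2) that] assms(1) unfolding acyclic_def by metis
  then show ?thesis unfolding distinct_conv_nth
  proof (intro allI impI)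
    fix i j assume h: "\<And>i j. i < j \<Longrightarrow> j < length p \<Longrightarrow> p!i \<noteq> p!j"
      "i < length p" "j < length p" "i \<noteq> j"
    show "p!i \<noteq> p!j"
    proof (cases "i < j")
      case True then show ?thesis using h by blast
    next
      case False then have "j < i" using h by simp
      then show ?thesis using h by metis
    qed
  qed
qed

lemma walk_exists:
  assumes "(a,b) \<in> E\<^sup>+"
  shows "\<exists>p. length p \<ge> 2 \<and> hd p = a \<and> last p = b \<and> dwalk E p"
  using assms
proof (induction rule: trancl_induct)
  case (base y)
  then show ?case by (intro exI[of _ "[a,y]"]) (auto simp: dwalk_def less_Suc_eq)
next
  case (step y z)
  then obtain p where p: "length p \<ge> 2" "hd p = a" "last p = y" "dwalk E p" by blast
  have "dwalk E (p @ [z])"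
    unfolding dwalk_def
  proof (intro allI impI)
    fix i assume i: "Suc i < length (p @ [z])"
    show "((p @ [z]) ! i, (p @ [z]) ! Suc i) \<in> E"
    proof (cases "Suc i < length p")
      case True then show ?thesis using p(4) by (auto simp: dwalk_def nth_append)
    next
      case False
      then have "i = length p - 1" using i by auto
      have pne: "p \<noteq> []" using p(1) by auto
      have "(p @ [z]) ! i = last p" using \<open>i = length p - 1\<close> pne
        by (simp add: nth_append last_conv_nth)
      moreover have "(p @ [z]) ! Suc i = z" using \<open>i = length p - 1\<close> pne by (simp add: nth_append)
      ultimately show ?thesis using p(3) step(2) by simp
    qed
  qed
  moreover have "hd (p @ [z]) = a" using p(1,2) by (cases p) auto
  ultimately show ?case using p by (intro exI[of _ "p @ [z]"]) auto
qed

lemma no_collider: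
  assumes "acyclic E" "(q!i, q!Suc i) \<in> E" shows "\<not> collider E q i"
proof
  assume "collider E q i"
  then have "(q!Suc i, q!i) \<in> E" unfolding collider_def by auto
  with assms(2) have "(q!i, q!i) \<in> E\<^sup>+" by (meson trancl.intros)
  with assms(1) show False unfolding acyclic_def by auto
qed

theorem corollary2:
  fixes M :: "'a measure" and X U :: "'v set" and E :: "('v \<times> 'v) set"
    and val noise :: "'v \<Rightarrow> 'a \<Rightarrow> real" and f :: "'v \<Rightarrow> 'v \<Rightarrow> real \<Rightarrow> real"
    and xi xj xk xu :: 'v
  assumes "additive_SEM M X U E val f noise"
    and "CFC M (X \<union> U) E val"
    and "xi \<in> X" "xj \<in> X" "xk \<in> X" "xu \<in> X"
    and "distinct [xi, xj, xk, xu]"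
    and "parent E xk xi \<or> parent E xk xj"
    and "ancestor E xu xi"
    and "cond_indep M val {xu} {xk} {xi}"
  shows "parent E xk xj"
proof (rule ccontr)
  assume nj: "\<not> parent E xk xj"
  then have ki: "(xk, xi) \<in> E" using assms(8) unfolding parent_def by auto
  have "is_DAG (X \<union> U) E" using assms(1) unfolding additive_SEM_def by (elim conjE)
  then have ac: "acyclic E" unfolding is_DAG_def by (elim conjE)
  have sep: "d_separated E {xu} {xk} {xi}"
  proof -
    have "{xu} \<subseteq> X \<union> U" "{xk} \<subseteq> X \<union> U" "{xi} \<subseteq> X \<union> U"
      using assms(3-6) by auto
    moreover have "{xu} \<inter> {xk} = {}" "{xu} \<inter> {xi} = {}" "{xk} \<inter> {xi} = {}"
      using assms(7) by auto
    note h = assms(2)[unfolded CFC_def, THEN spec[of _ "{xu}"], THEN spec[of _ "{xk}"], THEN spec[of _ "{xi}"]]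
    ultimately show ?thesis using h assms(10) assms(7) by simp
  qed
  obtain p where p: "length p \<ge> 2" "hd p = xu" "last p = xi" "dwalk E p"
    using walk_exists[of xu xi E, OF assms(9)[unfolded ancestor_def]] by blast
  have dp: "distinct p" using walk_distinct[OF ac p(4)] .
  define n where "n = length p"
  have pne: "p \<noteq> []" using p(1) by auto
  have p0: "p!0 = xu" using p(2) pne hd_conv_nth by metis
  have pn: "p!(n-1) = xi" using p(3) pne last_conv_nth unfolding n_def by metis
  have ne: "p!i \<noteq> xi" if "i < n - 1" for i
  proof
    assume "p!i = xi"
    then have "p!i = p!(n-1)" using pn by simp
    moreover have "n - 1 < length p" "i < length p" using that p(1) unfolding n_def by auto
    ultimately have "i = n - 1" using dp nth_eq_iff_index_eq by metis
    then show False using that by simp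
  qed
  have pe: "(p!i, p!Suc i) \<in> E" if "Suc i < n" for i using p(4) that unfolding dwalk_def n_def by auto
  show False
  proof (cases "xk \<in> set p")
    case False
    define q where "q = p @ [xk]"
    have qi: "q!i = p!i" if "i < n" for i using that unfolding q_def n_def by (simp add: nth_append)
    have qn: "q!n = xk" unfolding q_def n_def by simp
    have lq: "length q = Suc n" unfolding q_def n_def by simp
    have ip: "is_path E q"
      unfolding is_path_def
    proof (intro conjI allI impI)
      show "q \<noteq> []" unfolding q_def by simp
      show "distinct q" unfolding q_def using dp False by simp
    next
      fix i assume i: "Suc i < length q"
      show "(q ! i, q ! Suc i) \<in> E \<or> (q ! Suc i, q ! i) \<in> E"
      proof (cases "Suc i < n")
        case True then show ?thesis using pe qi by auto
      next
        case False then have "i = n - 1" "Suc i = n" using i lq by auto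
        then show ?thesis using qi qn pn ki p(1) n_def by auto
      qed
    qed
    have "\<forall>i. 0 < i \<and> Suc i < length q \<longrightarrow>
        (collider E q i \<longrightarrow> (\<exists>z\<in>{xi}. (q ! i, z) \<in> E\<^sup>*)) \<and>
        (\<not> collider E q i \<longrightarrow> q ! i \<notin> {xi})"
    proof (rule allI, rule impI)
      fix i assume i: "0 < i \<and> Suc i < length q"
      show "(collider E q i \<longrightarrow> (\<exists>z\<in>{xi}. (q ! i, z) \<in> E\<^sup>*)) \<and>
        (\<not> collider E q i \<longrightarrow> q ! i \<notin> {xi})"
      proof (rule conjI)
      show "collider E q i \<longrightarrow> (\<exists>z\<in>{xi}. (q ! i, z) \<in> E\<^sup>*)"
      proof
        assume c: "collider E q i"
        have "i = n - 1"
        proof (rule ccontr)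
          assume "i \<noteq> n - 1"
          then have "Suc i < n" using i lq by auto
          then have "(q!i, q!Suc i) \<in> E" using pe qi by auto
          then show False using no_collider[OF ac] c by auto
        qed
        then show "\<exists>z\<in>{xi}. (q ! i, z) \<in> E\<^sup>*" using qi pn p(1) n_def by auto
      qed
      show "\<not> collider E q i \<longrightarrow> q ! i \<notin> {xi}"
      proof
        assume nc: "\<not> collider E q i"
        have "i \<noteq> n - 1"
        proof
          assume ii: "i = n - 1"
          have s: "Suc (i-1) = i" using i by simp
          have "(p!(i-1), p!Suc (i-1)) \<in> E" using pe[of "i-1"] ii i p(1) n_def by simp
          then have "(q!(i-1), q!i) \<in> E" using qi[of "i-1"] qi[of i] ii p(1) n_def s by simp
          moreover have si: "Suc i = n" using ii p(1) n_def by simp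
          moreover have "(q!Suc i, q!i) \<in> E" using ii qn qi[of i] pn ki p(1) n_def si by simp
          ultimately show False using nc i unfolding collider_def by blast
        qed
        then have "i < n - 1" using i lq by auto
        then show "q ! i \<notin> {xi}" using ne qi by auto
      qed
      qed
    qed
    with ip have "d_connecting E q {xi}" unfolding d_connecting_def by blast
    moreover have "hd q = xu" "last q = xk" unfolding q_def using p by (auto simp: hd_append)
    ultimately show False using sep unfolding d_separated_def by auto
  next
    case True
    then obtain m where m: "m < n" "p!m = xk" unfolding n_def by (metis in_set_conv_nth)
    have m0: "m \<noteq> 0" using m p0 assms(7) by (cases m) auto
    have "m \<noteq> n - 1" using m pn assms(7) by auto
    then have mn: "m < n - 1" using m by linarith
    define q where "q = take (Suc m) p"
    have qi: "q!i = p!i" if "i \<le> m" for i using that unfolding q_def by simp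
    have lq: "length q = Suc m" unfolding q_def using m n_def by simp
    have ip: "is_path E q"
      unfolding is_path_def
    proof (intro conjI allI impI)
      show "q \<noteq> []" using lq by auto
      show "distinct q" unfolding q_def using dp by simp
    next
      fix i assume i: "Suc i < length q"
      then show "(q ! i, q ! Suc i) \<in> E \<or> (q ! Suc i, q ! i) \<in> E"
        using pe[of i] qi lq mn by auto
    qed
    have "\<forall>i. 0 < i \<and> Suc i < length q \<longrightarrow>
        (collider E q i \<longrightarrow> (\<exists>z\<in>{xi}. (q ! i, z) \<in> E\<^sup>*)) \<and>
        (\<not> collider E q i \<longrightarrow> q ! i \<notin> {xi})"
    proof (rule allI, rule impI)
      fix i assume i: "0 < i \<and> Suc i < length q"
      have e: "(q!i, q!Suc i) \<in> E" using pe[of i] qi i lq mn by auto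
      show "(collider E q i \<longrightarrow> (\<exists>z\<in>{xi}. (q ! i, z) \<in> E\<^sup>*)) \<and>
        (\<not> collider E q i \<longrightarrow> q ! i \<notin> {xi})"
      proof (rule conjI)
      show "collider E q i \<longrightarrow> (\<exists>z\<in>{xi}. (q ! i, z) \<in> E\<^sup>*)"
        using no_collider[OF ac e] by auto
      show "\<not> collider E q i \<longrightarrow> q ! i \<notin> {xi}"
        using ne[of i] qi i lq mn by auto
      qed
    qed
    with ip have "d_connecting E q {xi}" unfolding d_connecting_def by blast
    moreover have "hd q = xu" using p(2) pne unfolding q_def by (cases p) auto
    moreover have "last q = xk"
    proof -
      have "q \<noteq> []" using lq by auto
      then have "last q = q ! m" using lq last_conv_nth by (metis diff_Suc_1)
      then show ?thesis using qi m by simp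
    qed
    ultimately show False using sep unfolding d_separated_def by auto
  qed
qed

end
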